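(* There exist two players with the same (general, non-additive) valuation $v$ over a finite set of goods such that no allocation is both EFX and Pareto optimal. Here $v$ is allowed to have zero marginal utility, i.e. $v(S\cup\{g\})=v(S)$ for some $S$ and $g\notin S$.
   Context: A valuation is a function $v:2^M\to\mathbb{R}_{\ge0}$ with $v(\emptyset)=0$ that is monotone: $v(S)\le v(T)$ whenever $S\subseteq T$. An allocation is an ordered partition $(A_1,\dots,A_n)$ of $M$; parts may be empty. It is EFX if for all players $i,j$ and every $g\in A_j$ we have $v_i(A_i)\ge v_i(A_j\setminus\{g\})$. It is Pareto optimal (PO) if there is no allocation $B$ with $v_i(B_i)\ge v_i(A_i)$ for all $i$ and $v_j(B_j)>v_j(A_j)$ for some $j$. *)

theory Defs
  imports Complex_Main
begin

definition valuation :: "'g set \<Rightarrow> ('g set \<Rightarrow> real) \<Rightarrow> bool" where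
  "valuation M v \<longleftrightarrow> v {} = 0 \<and> (\<forall>S. S \<subseteq> M \<longrightarrow> 0 \<le> v S) \<and>
     (\<forall>S T. S \<subseteq> T \<and> T \<subseteq> M \<longrightarrow> v S \<le> v T)"

definition allocation :: "'p set \<Rightarrow> 'g set \<Rightarrow> ('p \<Rightarrow> 'g set) \<Rightarrow> bool" where
  "allocation N M A \<longleftrightarrow> (\<forall>i\<in>N. A i \<subseteq> M) \<and> (\<Union>i\<in>N. A i) = M \<and>
     (\<forall>i\<in>N. \<forall>j\<in>N. i \<noteq> j \<longrightarrow> A i \<inter> A j = {})"

definition EFX :: "'p set \<Rightarrow> ('p \<Rightarrow> 'g set \<Rightarrow> real) \<Rightarrow> ('p \<Rightarrow> 'g set) \<Rightarrow> bool" where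
  "EFX N vs A \<longleftrightarrow> (\<forall>i\<in>N. \<forall>j\<in>N. \<forall>g\<in>A j. vs i (A j - {g}) \<le> vs i (A i))"

definition pareto_optimal ::
  "'p set \<Rightarrow> 'g set \<Rightarrow> ('p \<Rightarrow> 'g set \<Rightarrow> real) \<Rightarrow> ('p \<Rightarrow> 'g set) \<Rightarrow> bool" where
  "pareto_optimal N M vs A \<longleftrightarrow> \<not> (\<exists>B. allocation N M B \<and>
     (\<forall>i\<in>N. vs i (A i) \<le> vs i (B i)) \<and> (\<exists>j\<in>N. vs j (A j) < vs j (B j)))"

end

theory Submission
  imports Defs
begin

definition vv :: "nat set \<Rightarrow> real" where
  "vv S = (if 1 \<in> S \<and> 2 \<in> S then (if 0 \<in> S then 2 else 1) else 0)"

lemma alloc_B: "allocation {0,1::nat} {0,1,2::nat} (\<lambda>i. if i = 0 then {0,1,2} else {})"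
  "allocation {0,1::nat} {0,1,2::nat} (\<lambda>i. if i = 1 then {0,1,2} else {})"
  by (auto simp: allocation_def)

theorem theorem5p2:
  shows "\<exists>(M :: nat set) (v :: nat set \<Rightarrow> real).
    finite M \<and> valuation M v \<and>
    (\<exists>S g. S \<subseteq> M \<and> g \<in> M \<and> g \<notin> S \<and> v (insert g S) = v S) \<and>
    \<not> (\<exists>A. allocation {0, 1 :: nat} M A \<and> EFX {0, 1} (\<lambda>_. v) A \<and>
           pareto_optimal {0, 1} M (\<lambda>_. v) A)"
proof (rule exI[of _ "{0,1,2}"], rule exI[of _ vv], intro conjI)
  show "finite {0,1,2::nat}" by simp
  show "valuation {0,1,2} vv" unfolding valuation_def vv_def by auto
  show "\<exists>S g. S \<subseteq> {0,1,2::nat} \<and> g \<in> {0,1,2} \<and> g \<notin> S \<and> vv (insert g S) = vv S"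
    by (rule exI[of _ "{}"], rule exI[of _ "0::nat"]) (simp add: vv_def)
  show "\<not> (\<exists>A. allocation {0, 1 :: nat} {0,1,2} A \<and> EFX {0, 1} (\<lambda>_. vv) A \<and>
           pareto_optimal {0, 1} {0,1,2} (\<lambda>_. vv) A)"
  proof
    assume "\<exists>A. allocation {0, 1 :: nat} {0,1,2} A \<and> EFX {0, 1} (\<lambda>_. vv) A \<and>
           pareto_optimal {0, 1} {0,1,2} (\<lambda>_. vv) A"
    then obtain A where al: "allocation {0, 1 :: nat} {0,1,2} A" and ef: "EFX {0, 1} (\<lambda>_. vv) A"
      and po: "pareto_optimal {0, 1} {0,1,2} (\<lambda>_. vv) A" by blast
    have s0: "A 0 \<subseteq> {0,1,2}" and u: "A 0 \<union> A 1 = {0,1,2}" and d: "A 0 \<inter> A 1 = {}"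
      using al unfolding allocation_def by auto
    have a1: "A 1 = {0,1,2} - A 0" using u d by blast
    have e: "\<And>i j g. i \<in> {0,1} \<Longrightarrow> j \<in> {0,1} \<Longrightarrow> g \<in> A j \<Longrightarrow> vv (A j - {g}) \<le> vv (A i)"
      using ef unfolding EFX_def by blast
    have p1: "\<not> (vv (A 0) \<le> 2 \<and> vv (A 1) \<le> 0 \<and> (vv (A 0) < 2 \<or> vv (A 1) < 0))" (is "\<not> ?P")
    proof
      assume h: "?P"
      have "\<exists>B. allocation {0,1::nat} {0,1,2} B \<and> (\<forall>i\<in>{0,1}. vv (A i) \<le> vv (B i)) \<and> (\<exists>j\<in>{0,1}. vv (A j) < vv (B j))"
        by (rule exI, rule conjI, rule alloc_B(1)) (use h in \<open>auto simp: vv_def\<close>)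
      then show False using po unfolding pareto_optimal_def by blast
    qed
    have p2: "\<not> (vv (A 0) \<le> 0 \<and> vv (A 1) \<le> 2 \<and> (vv (A 0) < 0 \<or> vv (A 1) < 2))" (is "\<not> ?P")
    proof
      assume h: "?P"
      have "\<exists>B. allocation {0,1::nat} {0,1,2} B \<and> (\<forall>i\<in>{0,1}. vv (A i) \<le> vv (B i)) \<and> (\<exists>j\<in>{0,1}. vv (A j) < vv (B j))"
        by (rule exI, rule conjI, rule alloc_B(2)) (use h in \<open>auto simp: vv_def\<close>)
      then show False using po unfolding pareto_optimal_def by blast
    qed
    show False
    proof (cases "1 \<in> A 0 \<and> 2 \<in> A 0")
      case True
      show ?thesis
      proof (cases "0 \<in> A 0")
        case True
        with \<open>1 \<in> A 0 \<and> 2 \<in> A 0\<close> have "A 0 = {0,1,2}" using s0 by auto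
        then show False using e[of 1 0 0] a1 by (simp add: vv_def)
      next
        case False
        with \<open>1 \<in> A 0 \<and> 2 \<in> A 0\<close> have "vv (A 0) = 1" "vv (A 1) = 0" using a1
          by (auto simp: vv_def)
        then show False using p1 by simp
      qed
    next
      case F: False
      show ?thesis
      proof (cases "1 \<in> A 1 \<and> 2 \<in> A 1")
        case True
        show ?thesis
        proof (cases "0 \<in> A 1")
          case True
          with \<open>1 \<in> A 1 \<and> 2 \<in> A 1\<close> have "A 1 = {0,1,2}" using a1 by auto
          moreover have "A 0 = {}" using calculation s0 a1 by auto
          ultimately show False using e[of 0 1 0] by (simp add: vv_def)
        next
          case False
          with \<open>1 \<in> A 1 \<and> 2 \<in> A 1\<close> have "vv (A 1) = 1" "vv (A 0) = 0" using a1 F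
            by (auto simp: vv_def)
          then show False using p2 by simp
        qed
      next
        case False
        then have "vv (A 1) = 0" "vv (A 0) = 0" using F by (auto simp: vv_def)
        then show False using p1 by simp
      qed
    qed
  qed
qed

end
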